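(* For every pair of integers $0\le m\le n$ and every $\sigma\ge0$, the system $(\ast)$ has a unique solution $(L,M,N)$ with $L\in(-\pi/2,0]$, $M,N\in[0,\pi/2)$. Moreover: (1) For $0\le m<n$ and $\sigma>0$, $L,N=O(\sigma/n)$ with an absolute implied constant. (2) Additionally, $M=O(\sigma/m)$ uniformly for $1\le m\le n$, $\sigma>0$; and for $m=0<n$, $M=O(\sqrt\sigma)$ for all sufficiently small $\sigma>0$, with an absolute implied constant. (3) For $m=n=0$, $|L|,|M|,|N|\ll\sqrt\sigma$; in particular $L,M,N$ are continuous at $\sigma=0$.
   Context: Fix $r>0$. For integers $m,n\ge0$ and $\sigma\ge0$, the system $(\ast)$ in the unknowns $L,M,N$ is $$\big(2L-M-N-(m+n)\pi\big)\tan L=3r\sigma,\quad \big(2M-N-L+m\pi\big)\tan M=3r\sigma,\quad \big(2N-L-M+n\pi\big)\tan N=3r\sigma .$$ *)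

theory Defs
  imports "HOL-Analysis.Analysis"
begin

definition is_sol :: "real \<Rightarrow> nat \<Rightarrow> nat \<Rightarrow> real \<Rightarrow> real \<Rightarrow> real \<Rightarrow> real \<Rightarrow> bool" where
  "is_sol r m n \<sigma> L M N \<longleftrightarrow>
     (2*L - M - N - real (m+n) * pi) * tan L = 3*r*\<sigma> \<and>
     (2*M - N - L + real m * pi) * tan M = 3*r*\<sigma> \<and>
     (2*N - L - M + real n * pi) * tan N = 3*r*\<sigma> \<and>
     L \<in> {-pi/2<..0} \<and> M \<in> {0..<pi/2} \<and> N \<in> {0..<pi/2}"

definition sol :: "real \<Rightarrow> nat \<Rightarrow> nat \<Rightarrow> real \<Rightarrow> real \<times> real \<times> real" where
  "sol r m n \<sigma> = (THE p. is_sol r m n \<sigma> (fst p) (fst (snd p)) (snd (snd p)))"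

end

theory Submission
  imports Defs
begin

lemma tan_ge_x: assumes "0 \<le> x" "x < pi/2" shows "x \<le> tan x"
proof (cases "x = 0")
  case True then show ?thesis by simp
next
  case False
  then have x0: "0 < x" using assms by simp
  have "\<And>z. 0 \<le> z \<Longrightarrow> z \<le> x \<Longrightarrow> DERIV tan z :> inverse ((cos z)\<^sup>2)"
  proof -
    fix z assume "0 \<le> z" "z \<le> x"
    then have "cos z > 0" using assms by (intro cos_gt_zero_pi) auto
    then show "DERIV tan z :> inverse ((cos z)\<^sup>2)" by (intro DERIV_tan) simp
  qed
  from MVT2[OF x0 this] obtain z where z: "0 < z" "z < x" "tan x - tan 0 = (x - 0) * inverse ((cos z)\<^sup>2)" by blast
  have cz: "cos z > 0" using z assms by (intro cos_gt_zero_pi) auto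
  have "(cos z)\<^sup>2 \<le> 1" using cos_le_one[of z] cz by (simp add: power_le_one)
  hence "inverse ((cos z)\<^sup>2) \<ge> 1" using cz by (simp add: one_le_inverse_iff)
  hence "x * 1 \<le> x * inverse ((cos z)\<^sup>2)" using x0 by (intro mult_left_mono) auto
  then show ?thesis using z by simp
qed

definition F :: "real \<Rightarrow> real \<Rightarrow> real" where "F s x = 3*x - s / tan x"

lemma F_odd: "F s (-x) = - F s x" by (simp add: F_def)

lemma F_mono: assumes "s > 0" "0 < x" "x < y" "y < pi/2" shows "F s x < F s y"
proof -
  have tx: "tan x > 0" "tan y > 0" using assms by (auto intro!: tan_gt_zero)
  have "tan x < tan y" using assms by (intro tan_monotone) auto
  hence "s / tan y < s / tan x" using tx assms(1) by (intro divide_strict_left_mono) auto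
  thus ?thesis using assms unfolding F_def by simp
qed

lemma F_mono_neg: assumes "s > 0" "-(pi/2) < x" "x < y" "y < 0" shows "F s x < F s y"
  using F_mono[OF assms(1), of "-y" "-x"] assms by (simp add: F_odd)

lemma F_cont: assumes "0 < x" "x < pi/2" shows "isCont (F s) x"
proof -
  have "cos x > 0" using assms by (intro cos_gt_zero_pi) auto
  moreover have "tan x > 0" using assms by (intro tan_gt_zero) auto
  ultimately show ?thesis unfolding F_def[abs_def] by (intro continuous_intros) auto
qed

lemma F_exists: assumes "s > 0" "y < 3*pi/2" shows "\<exists>x. 0 < x \<and> x < pi/2 \<and> F s x = y"
proof -
  define d where "d = (3*pi/2 - y) / (4*(s+3))"
  have d0: "d > 0" unfolding d_def using assms by auto
  define e where "e = arctan d"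
  have e0: "0 < e" "e < pi/2" unfolding e_def using d0 arctan_ubound by auto
  have te: "tan e = d" unfolding e_def by (simp add: tan_arctan)
  have ed: "e \<le> d" using tan_ge_x[of e] e0 te by simp
  define b where "b = pi/2 - e"
  have b0: "0 < b" "b < pi/2" unfolding b_def using e0 by auto
  have tb: "tan b = inverse d" unfolding b_def tan_cot te ..
  have sd: "s / tan b = s * d" unfolding tb by (simp add: divide_inverse)
  have "(3+s)*d = (3*pi/2 - y)/4" unfolding d_def using assms by (simp add: field_simps)
  hence Fb: "F s b \<ge> y" unfolding F_def sd using ed assms d0 unfolding b_def by (simp add: algebra_simps)
  define a where "a = arctan (s / (\<bar>y\<bar> + 7))"
  have a0: "0 < a" "a < pi/2" unfolding a_def using assms arctan_ubound by auto
  have ta: "s / tan a = \<bar>y\<bar> + 7" unfolding a_def tan_arctan using assms by simp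
  have "F s a \<le> y" unfolding F_def ta using a0 pi_less_4 by linarith
  have ab: "a \<le> b"
  proof (rule ccontr)
    assume "\<not> a \<le> b"
    hence "F s b < F s a" using F_mono[OF assms(1) b0(1) _ a0(2)] by simp
    thus False using \<open>F s a \<le> y\<close> Fb by simp
  qed
  have "continuous_on {a..b} (F s)"
    using a0 b0 by (intro continuous_at_imp_continuous_on ballI F_cont) auto
  from IVT'[OF \<open>F s a \<le> y\<close> Fb ab this] obtain x where "a \<le> x" "x \<le> b" "F s x = y" by blast
  thus ?thesis using a0 b0 by (intro exI[of _ x]) auto
qed


definition P :: "real \<Rightarrow> real \<Rightarrow> real" where
  "P s y = (THE x. 0 < x \<and> x < pi/2 \<and> F s x = y)"

lemma F_inj: assumes "s > 0" "0 < x" "x < pi/2" "0 < x'" "x' < pi/2" "F s x = F s x'" shows "x = x'"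
  using F_mono[OF assms(1), of x x'] F_mono[OF assms(1), of x' x] assms by (cases x x' rule: linorder_cases) auto

lemma P_prop: assumes "s > 0" "y < 3*pi/2" shows "0 < P s y" "P s y < pi/2" "F s (P s y) = y"
proof -
  have "\<exists>!x. 0 < x \<and> x < pi/2 \<and> F s x = y"
    using F_exists[OF assms] F_inj[OF assms(1)] by blast
  from theI'[OF this] show "0 < P s y" "P s y < pi/2" "F s (P s y) = y" unfolding P_def by auto
qed

lemma P_unique: assumes "s > 0" "0 < x" "x < pi/2" shows "P s (F s x) = x"
proof -
  have "F s x < 3*pi/2"
  proof -
    have "tan x > 0" using assms by (intro tan_gt_zero) auto
    hence "s / tan x > 0" using assms by simp
    thus ?thesis unfolding F_def using assms by simp
  qed
  from P_prop[OF assms(1) this] show ?thesis using F_inj[OF assms(1)] assms by metis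
qed

lemma P_cont: assumes "s > 0" "y < 3*pi/2" shows "isCont (P s) y"
proof -
  define x where "x = P s y"
  have x: "0 < x" "x < pi/2" "F s x = y" using P_prop[OF assms] unfolding x_def by auto
  define d where "d = min x (pi/2 - x) / 2"
  have d0: "d > 0" unfolding d_def using x by auto
  have near: "0 < z \<and> z < pi/2" if "\<bar>z - x\<bar> \<le> d" for z
  proof -
    have "z - x \<le> d" "x - z \<le> d" using that by auto
    moreover have "2*d \<le> x" "2*d \<le> pi/2-x" unfolding d_def by auto
    ultimately show "0 < z \<and> z < pi/2" using x by (intro conjI) linarith+
  qed
  have "isCont (P s) (F s x)"
    by (rule isCont_inverse_function[OF d0]) (auto intro!: P_unique[OF assms(1)] F_cont dest: near)
  thus ?thesis using x by simp
qed


lemma P_cont': assumes "s > 0" "isCont g t" "g t < 3*pi/2" shows "isCont (\<lambda>x. P s (g x)) t"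
  using isCont_o2[OF assms(2) P_cont[OF assms(1,3)]] .

lemma tan_pos_small: assumes "0 < x" "x < pi/2" shows "tan x > 0" "cos x > 0"
  using assms by (auto intro!: tan_gt_zero cos_gt_zero_pi)

lemma key_identity:
  fixes L M N s a b t :: real
  assumes "tan L \<noteq> 0" "tan M \<noteq> 0" "tan N \<noteq> 0"
    "F s L = t + (a+2*b)*pi" "F s M = t + (b-a)*pi" "F s N = t"
  shows "(2*L - M - N - (a+b)*pi) - s / tan L = (2*M - N - L + a*pi) - s / tan M"
        "(2*N - L - M + b*pi) - s / tan N = (2*M - N - L + a*pi) - s / tan M"
  using assms unfolding F_def by (simp_all add: algebra_simps)

lemma exist_pos:
  fixes s :: real and m n :: nat
  assumes s: "s > 0" and mn: "m \<le> n"
  shows "\<exists>L M N. (2*L - M - N - real (m+n) * pi) * tan L = s \<and>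
     (2*M - N - L + real m * pi) * tan M = s \<and>
     (2*N - L - M + real n * pi) * tan N = s \<and>
     L \<in> {-pi/2<..0} \<and> M \<in> {0..<pi/2} \<and> N \<in> {0..<pi/2}"
proof -
  define a where "a = real m"
  define b where "b = real n"
  have ab: "a \<le> b" "0 \<le> a" unfolding a_def b_def using mn by auto
  define lo where "lo = -3*pi/2 - (a+2*b)*pi"
  define hi where "hi = 3*pi/2 - (b-a)*pi"
  define NN where "NN t = P s t" for t
  define MM where "MM t = P s (t + (b-a)*pi)" for t
  define LL where "LL t = - P s (-(t + (a+2*b)*pi))" for t
  define lam where "lam t = 2 * MM t - NN t - LL t + a*pi - s / tan (MM t)" for t
  have dom: "0 < NN t \<and> NN t < pi/2 \<and> F s (NN t) = t \<and>
             0 < MM t \<and> MM t < pi/2 \<and> F s (MM t) = t + (b-a)*pi \<and>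
             -(pi/2) < LL t \<and> LL t < 0 \<and> F s (LL t) = t + (a+2*b)*pi" if "lo < t" "t < hi" for t
  proof -
    have 1: "t < 3*pi/2" using that ab unfolding hi_def by (smt (verit) mult_nonneg_nonneg pi_ge_zero)
    have 2: "t + (b-a)*pi < 3*pi/2" using that unfolding hi_def by simp
    have 3: "-(t + (a+2*b)*pi) < 3*pi/2" using that unfolding lo_def by simp
    show ?thesis unfolding NN_def MM_def LL_def using P_prop[OF s 1] P_prop[OF s 2] P_prop[OF s 3]
      by (simp add: F_odd)
  qed
  have lam_eq: "lam t = (2*LL t - MM t - NN t - (a+b)*pi) - s / tan (LL t)"
    "lam t = (2*NN t - LL t - MM t + b*pi) - s / tan (NN t)" if "lo < t" "t < hi" for t
  proof -
    have d: "tan (LL t) \<noteq> 0" "tan (MM t) \<noteq> 0" "tan (NN t) \<noteq> 0"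
      using dom[OF that] tan_less_zero[of "LL t"] tan_pos_small[of "MM t"] tan_pos_small[of "NN t"] by auto
    show "lam t = (2*LL t - MM t - NN t - (a+b)*pi) - s / tan (LL t)"
      "lam t = (2*NN t - LL t - MM t + b*pi) - s / tan (NN t)"
      using key_identity[OF d, of s t a b] dom[OF that] unfolding lam_def by auto
  qed
  have lam_cont: "isCont lam t" if "lo < t" "t < hi" for t
  proof -
    have c1: "isCont NN t" unfolding NN_def using P_cont[OF s] dom[OF that] that ab unfolding hi_def
      by (smt (verit) mult_nonneg_nonneg pi_ge_zero)
    have c2: "isCont MM t" unfolding MM_def using that unfolding hi_def
      by (intro P_cont'[OF s]) (auto intro!: continuous_intros)
    have c3: "isCont LL t" unfolding LL_def using that unfolding lo_def
      by (intro isCont_minus P_cont'[OF s]) (auto intro!: continuous_intros)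
    have m: "0 < MM t" "MM t < pi/2" using dom[OF that] by auto
    show ?thesis unfolding lam_def using c1 c2 c3 tan_pos_small[OF m]
      by (intro continuous_intros) auto
  qed
  define del where "del = 1 / (4*(s+1))"
  have del: "0 < del" "del \<le> 1/4" "s * del < 1/4" unfolding del_def using s by (auto simp: field_simps)
  define e where "e = arctan del"
  have e: "0 < e" "e < pi/2" "tan e = del" "e \<le> del"
    unfolding e_def using del arctan_ubound tan_arctan tan_ge_x[of "arctan del"] by auto
  have pi3: "pi > 3" by (rule pi_gt3)
  have nn: "0 \<le> (a+2*b)*pi" "0 \<le> (b-a)*pi" "0 < s*del" "0 \<le> a*pi" "0 \<le> b*pi"
    using ab del(1) s by auto
  have nn2: "(b-a)*pi \<le> (a+2*b)*pi" using ab by (intro mult_right_mono) auto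
  define L1 where "L1 = -(pi/2 - e)"
  have L1: "-(pi/2) < L1" "L1 < 0" unfolding L1_def using e by auto
  have tL1: "s / tan L1 = - (s * del)" unfolding L1_def tan_minus tan_cot e(3) by (simp add: divide_inverse)
  define t1 where "t1 = F s L1 - (a+2*b)*pi"
  have FL1: "F s L1 = 3*L1 + s*del" unfolding F_def tL1 by simp
  have t1: "lo < t1" "t1 < hi" unfolding t1_def lo_def hi_def FL1 using L1 del ab pi3 nn nn2 by linarith+
  have LL1: "LL t1 = L1" unfolding LL_def t1_def
    using P_unique[OF s, of "-L1"] L1 by (simp add: F_odd)
  have lam1: "lam t1 < 0"
  proof -
    have "lam t1 = (2*L1 - MM t1 - NN t1 - (a+b)*pi) + s*del" using lam_eq(1)[OF t1] LL1 tL1 by simp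
    also have "\<dots> \<le> 2*L1 + s*del" using dom[OF t1] ab pi3 by (smt (verit) mult_nonneg_nonneg)
    also have "\<dots> < 0" unfolding L1_def using e del pi3 by simp
    finally show ?thesis .
  qed
  define M2 where "M2 = pi/2 - e"
  have M2: "0 < M2" "M2 < pi/2" unfolding M2_def using e by auto
  have tM2: "s / tan M2 = s * del" unfolding M2_def tan_cot e(3) by (simp add: divide_inverse)
  define t2 where "t2 = F s M2 - (b-a)*pi"
  have FM2: "F s M2 = 3*M2 - s*del" unfolding F_def tM2 by simp
  have t2: "lo < t2" "t2 < hi" unfolding t2_def lo_def hi_def FM2 using M2 del ab pi3 e nn nn2 by linarith+
  have MM2: "MM t2 = M2" unfolding MM_def t2_def using P_unique[OF s M2] by simp
  have lam2: "lam t2 > 0"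
  proof -
    have "lam t2 = 2*M2 - NN t2 - LL t2 + a*pi - s*del" unfolding lam_def MM2 tM2 by simp
    also have "\<dots> > 2*M2 - pi/2 - s*del" using dom[OF t2] ab pi3 by (smt (verit) mult_nonneg_nonneg)
    finally have "lam t2 > 2*M2 - pi/2 - s*del" .
    moreover have "2*M2 - pi/2 - s*del \<ge> 0" unfolding M2_def using e del pi3 by simp
    ultimately show ?thesis by simp
  qed
  have cont: "continuous_on {min t1 t2..max t1 t2} lam"
    using t1 t2 by (intro continuous_at_imp_continuous_on ballI lam_cont) auto
  obtain t where t: "min t1 t2 \<le> t" "t \<le> max t1 t2" "lam t = 0"
  proof (cases "t1 \<le> t2")
    case True
    then show ?thesis using IVT'[where f=lam and a=t1 and b=t2 and y=0] lam1 lam2 cont that by force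
  next
    case False
    then show ?thesis using IVT2'[where f=lam and a=t2 and b=t1 and y=0] lam1 lam2 cont that by force
  qed
  have tt: "lo < t" "t < hi" using t t1 t2 by auto
  note D = dom[OF tt]
  have tL: "tan (LL t) < 0" using D by (intro tan_less_zero) auto
  have tM: "tan (MM t) > 0" "tan (NN t) > 0" using D tan_pos_small by auto
  have e1: "(2*LL t - MM t - NN t - (a+b)*pi) * tan (LL t) = s"
    using lam_eq(1)[OF tt] t(3) tL by (simp add: field_simps)
  have e2: "(2*MM t - NN t - LL t + a*pi) * tan (MM t) = s"
    using t(3) tM unfolding lam_def by (simp add: field_simps)
  have e3: "(2*NN t - LL t - MM t + b*pi) * tan (NN t) = s"
    using lam_eq(2)[OF tt] t(3) tM by (simp add: field_simps)
  show ?thesis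
    apply (rule exI[of _ "LL t"], rule exI[of _ "MM t"], rule exI[of _ "NN t"])
    using e1 e2 e3 D unfolding a_def b_def by (auto simp: algebra_simps)
qed


lemma dec_pos: assumes "s > 0" "0 < x" "x < y" "y < pi/2" shows "s / tan y < s / tan x"
proof -
  have tx: "tan x > 0" "tan y > 0" using assms by (auto intro!: tan_gt_zero)
  have "tan x < tan y" using assms by (intro tan_monotone) auto
  thus ?thesis using tx assms(1) by (intro divide_strict_left_mono) auto
qed

lemma dec_neg: assumes "s > 0" "-(pi/2) < x" "x < y" "y < 0" shows "s / tan y < s / tan x"
  using dec_pos[OF assms(1), of "-y" "-x"] assms by simp

lemma F_less_pos: assumes "s > 0" "0 < x" "x < pi/2" "0 < y" "y < pi/2" "F s x < F s y" shows "x < y"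
  using F_mono[OF assms(1), of y x] assms by (cases "x = y"; force)

lemma F_less_neg: assumes "s > 0" "-(pi/2) < x" "x < 0" "-(pi/2) < y" "y < 0" "F s x < F s y" shows "x < y"
  using F_mono_neg[OF assms(1), of y x] assms by (cases "x = y"; force)

lemma F_inj_neg: assumes "s > 0" "-(pi/2) < x" "x < 0" "-(pi/2) < y" "y < 0" "F s x = F s y" shows "x = y"
  using F_mono_neg[OF assms(1), of y x] F_mono_neg[OF assms(1), of x y] assms by (cases x y rule: linorder_cases) auto

definition Rel :: "real \<Rightarrow> real \<Rightarrow> real \<Rightarrow> real \<Rightarrow> real \<Rightarrow> real \<Rightarrow> bool" where
  "Rel s a b L M N \<longleftrightarrow> -(pi/2) < L \<and> L < 0 \<and> 0 < M \<and> M < pi/2 \<and> 0 < N \<and> N < pi/2 \<and>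
     F s L - F s M = (2*a+b)*pi \<and> F s M - F s N = (b-a)*pi \<and> s / tan L + s / tan M + s / tan N = 0"

lemma sol_rel:
  fixes s a b L M N :: real
  assumes s: "s > 0"
    and e1: "(2*L - M - N - (a+b) * pi) * tan L = s"
    and e2: "(2*M - N - L + a * pi) * tan M = s"
    and e3: "(2*N - L - M + b * pi) * tan N = s"
    and r: "-(pi/2) < L" "L \<le> 0" "0 \<le> M" "M < pi/2" "0 \<le> N" "N < pi/2"
  shows "Rel s a b L M N"
proof -
  have "L \<noteq> 0" using e1 s by auto
  hence L: "L < 0" using r by auto
  have "M \<noteq> 0" using e2 s by auto
  hence M: "0 < M" using r by auto
  have "N \<noteq> 0" using e3 s by auto
  hence N: "0 < N" using r by auto
  have tL: "tan L < 0" using L r by (intro tan_less_zero) auto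
  have tM: "tan M > 0" "tan N > 0" using M N r by (auto intro!: tan_gt_zero)
  have A: "2*L - M - N - (a+b) * pi = s / tan L" using e1 tL by (simp add: field_simps)
  have B: "2*M - N - L + a * pi = s / tan M" using e2 tM by (simp add: field_simps)
  have C: "2*N - L - M + b * pi = s / tan N" using e3 tM by (simp add: field_simps)
  show ?thesis unfolding Rel_def F_def using L M N r A[symmetric] B[symmetric] C[symmetric]
    by (simp add: algebra_simps)
qed

lemma rel_cmp: assumes s: "s > 0" and R: "Rel s a b L M N" and R': "Rel s a b L' M' N'"
  and lt: "F s N < F s N'" shows False
proof -
  note R = R[unfolded Rel_def] and R' = R'[unfolded Rel_def]
  have "N < N'" using F_less_pos[OF s _ _ _ _ lt] R R' by auto
  have "F s M < F s M'" using lt R R' by linarith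
  hence "M < M'" using F_less_pos[OF s] R R' by auto
  have "F s L < F s L'" using \<open>F s M < F s M'\<close> R R' by linarith
  hence "L < L'" using F_less_neg[OF s] R R' by auto
  have "s / tan N' < s / tan N" using dec_pos[OF s _ \<open>N < N'\<close>] R R' by auto
  moreover have "s / tan M' < s / tan M" using dec_pos[OF s _ \<open>M < M'\<close>] R R' by auto
  moreover have "s / tan L' < s / tan L" using dec_neg[OF s _ \<open>L < L'\<close>] R R' by auto
  ultimately show False using R R' by linarith
qed

lemma rel_unique: assumes s: "s > 0" and R: "Rel s a b L M N" and R': "Rel s a b L' M' N'"
  shows "L = L' \<and> M = M' \<and> N = N'"
proof -
  have eq: "F s N = F s N'" using rel_cmp[OF s R R'] rel_cmp[OF s R' R] by (cases "F s N" "F s N'" rule: linorder_cases) auto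
  note R1 = R[unfolded Rel_def] and R1' = R'[unfolded Rel_def]
  have "N = N'" using F_inj[OF s _ _ _ _ eq] R1 R1' by auto
  moreover have "F s M = F s M'" using eq R1 R1' by linarith
  hence "M = M'" using F_inj[OF s] R1 R1' by auto
  moreover have "F s L = F s L'" using \<open>F s M = F s M'\<close> R1 R1' by linarith
  hence "L = L'" using F_inj_neg[OF s] R1 R1' by auto
  ultimately show ?thesis by simp
qed

lemma zero_sol:
  fixes a b L M N :: real
  assumes ab: "0 \<le> a" "0 \<le> b"
    and e1: "(2*L - M - N - (a+b) * pi) * tan L = 0"
    and e2: "(2*M - N - L + a * pi) * tan M = 0"
    and e3: "(2*N - L - M + b * pi) * tan N = 0"
    and r: "-(pi/2) < L" "L \<le> 0" "0 \<le> M" "M < pi/2" "0 \<le> N" "N < pi/2"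
  shows "L = 0 \<and> M = 0 \<and> N = 0"
proof -
  have p: "0 \<le> a*pi" "0 \<le> b*pi" using ab by auto
  have L: "L = 0"
  proof (rule ccontr)
    assume "L \<noteq> 0"
    hence "L < 0" using r by auto
    hence "tan L \<noteq> 0" using r tan_less_zero[of L] by auto
    hence "2*L - M - N - (a+b) * pi = 0" using e1 by simp
    thus False using \<open>L < 0\<close> r p by (simp add: algebra_simps)
  qed
  have M: "M = 0"
  proof (rule ccontr)
    assume "M \<noteq> 0"
    hence "M > 0" using r by auto
    hence "tan M \<noteq> 0" using r tan_gt_zero[of M] by auto
    hence NM: "N = 2*M + a*pi" using e2 L by simp
    hence "N > 0" using \<open>M > 0\<close> p by simp
    hence "tan N \<noteq> 0" using r tan_gt_zero[of N] by auto
    hence "2*N - M + b * pi = 0" using e3 L by simp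
    thus False using NM \<open>M > 0\<close> p by simp
  qed
  have N: "N = 0"
  proof (rule ccontr)
    assume "N \<noteq> 0"
    hence "N > 0" using r by auto
    hence "tan N \<noteq> 0" using r tan_gt_zero[of N] by auto
    hence "2*N + b * pi = 0" using e3 L M by simp
    thus False using \<open>N > 0\<close> p by simp
  qed
  show ?thesis using L M N by simp
qed

lemma sol_uniq:
  assumes r: "r > 0" "\<sigma> \<ge> 0" and S: "is_sol r m n \<sigma> L M N" and S': "is_sol r m n \<sigma> L' M' N'"
  shows "L = L' \<and> M = M' \<and> N = N'"
proof (cases "\<sigma> = 0")
  case True
  have "L = 0 \<and> M = 0 \<and> N = 0" using S True
    by (intro zero_sol[of "real m" "real n"]) (auto simp: is_sol_def)
  moreover have "L' = 0 \<and> M' = 0 \<and> N' = 0" using S' True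
    by (intro zero_sol[of "real m" "real n"]) (auto simp: is_sol_def)
  ultimately show ?thesis by simp
next
  case False
  hence s: "3*r*\<sigma> > 0" using r by simp
  have R: "Rel (3*r*\<sigma>) (real m) (real n) L M N" using S
    by (intro sol_rel[OF s]) (auto simp: is_sol_def)
  have R': "Rel (3*r*\<sigma>) (real m) (real n) L' M' N'" using S'
    by (intro sol_rel[OF s]) (auto simp: is_sol_def)
  show ?thesis using rel_unique[OF s R R'] .
qed

lemma sol_exists:
  assumes r: "r > 0" "\<sigma> \<ge> 0" "m \<le> n" shows "\<exists>L M N. is_sol r m n \<sigma> L M N"
proof (cases "\<sigma> = 0")
  case True
  then show ?thesis by (intro exI[of _ 0]) (auto simp: is_sol_def)
next
  case False
  hence s: "3*r*\<sigma> > 0" using r by simp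
  show ?thesis using exist_pos[OF s r(3)] unfolding is_sol_def by blast
qed

lemma sol_ex1:
  assumes r: "r > 0" "\<sigma> \<ge> 0" "m \<le> n"
  shows "\<exists>!p. is_sol r m n \<sigma> (fst p) (fst (snd p)) (snd (snd p))"
proof -
  obtain L M N where S: "is_sol r m n \<sigma> L M N" using sol_exists[OF r] by blast
  show ?thesis
  proof (rule ex1I[of _ "(L, M, N)"])
    show "is_sol r m n \<sigma> (fst (L, M, N)) (fst (snd (L, M, N))) (snd (snd (L, M, N)))" using S by simp
  next
    fix p assume "is_sol r m n \<sigma> (fst p) (fst (snd p)) (snd (snd p))"
    from sol_uniq[OF r(1,2) this S] show "p = (L, M, N)" by (simp add: prod_eq_iff)
  qed
qed



lemma tan_le_x_neg: assumes "-(pi/2) < L" "L \<le> 0" shows "tan L \<le> L"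
  using tan_ge_x[of "-L"] assms by simp

lemma bnd_N: assumes r: "r > 0" "\<sigma> \<ge> 0" "n \<ge> 1" and S: "is_sol r m n \<sigma> L M N"
  shows "\<bar>N\<bar> \<le> 6*r/pi * \<sigma> / real n"
proof -
  have S: "(2*N - L - M + real n * pi) * tan N = 3*r*\<sigma>" "-(pi/2) < L" "L \<le> 0" "0 \<le> M" "M < pi/2" "0 \<le> N" "N < pi/2"
    using S by (auto simp: is_sol_def)
  have n: "real n \<ge> 1" using r by simp
  have "pi \<le> real n * pi" using mult_right_mono[OF n, of pi] by simp
  hence "real n * pi / 2 \<le> 2*N - L - M + real n * pi" using S by linarith
  moreover have "N \<le> tan N" using tan_ge_x S by auto
  ultimately have "N * (real n * pi / 2) \<le> tan N * (2*N - L - M + real n * pi)"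
    using S by (intro mult_mono) auto
  moreover have "tan N * (2*N - L - M + real n * pi) = 3*r*\<sigma>" using S(1) by (metis mult.commute)
  ultimately have "N * (real n * pi / 2) \<le> 3*r*\<sigma>" by linarith
  hence "N \<le> 3*r*\<sigma> / (real n * pi / 2)" using n by (subst pos_le_divide_eq) auto
  thus ?thesis using S n by (simp add: field_simps)
qed

lemma bnd_L: assumes r: "r > 0" "\<sigma> \<ge> 0" "n \<ge> 1" and S: "is_sol r m n \<sigma> L M N"
  shows "\<bar>L\<bar> \<le> 6*r/pi * \<sigma> / real n"
proof -
  have S: "(2*L - M - N - (real m + real n) * pi) * tan L = 3*r*\<sigma>" "-(pi/2) < L" "L \<le> 0" "0 \<le> M" "M < pi/2" "0 \<le> N" "N < pi/2"
    using S by (auto simp: is_sol_def)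
  have n: "real n \<ge> 1" using r by simp
  have "real n * pi \<le> -(2*L - M - N - (real m + real n) * pi)" using S n pi_gt_zero
    by (smt (verit) mult_nonneg_nonneg of_nat_0_le_iff distrib_right)
  moreover have "-L \<le> -tan L" using tan_le_x_neg S by auto
  ultimately have "(-L) * (real n * pi) \<le> (- tan L) * (-(2*L - M - N - (real m + real n) * pi))"
    using S by (intro mult_mono) auto
  moreover have "(- tan L) * (-(2*L - M - N - (real m + real n) * pi)) = 3*r*\<sigma>" using S(1) by (metis minus_mult_minus mult.commute)
  ultimately have "(-L) * (real n * pi) \<le> 3*r*\<sigma>" by linarith
  hence "-L \<le> 3*r*\<sigma> / (real n * pi)" using n by (subst pos_le_divide_eq) auto
  moreover have "3*r*\<sigma> / (real n * pi) \<le> 6*r/pi * \<sigma> / real n" using r n by (simp add: field_simps)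
  ultimately show ?thesis using S by simp
qed

lemma bnd_M: assumes r: "r > 0" "\<sigma> \<ge> 0" "m \<ge> 1" and S: "is_sol r m n \<sigma> L M N"
  shows "\<bar>M\<bar> \<le> 6*r/pi * \<sigma> / real m"
proof -
  have S: "(2*M - N - L + real m * pi) * tan M = 3*r*\<sigma>" "-(pi/2) < L" "L \<le> 0" "0 \<le> M" "M < pi/2" "0 \<le> N" "N < pi/2"
    using S by (auto simp: is_sol_def)
  have n: "real m \<ge> 1" using r by simp
  have "pi \<le> real m * pi" using mult_right_mono[OF n, of pi] by simp
  hence "real m * pi / 2 \<le> 2*M - N - L + real m * pi" using S by linarith
  moreover have "M \<le> tan M" using tan_ge_x S by auto
  ultimately have "M * (real m * pi / 2) \<le> tan M * (2*M - N - L + real m * pi)"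
    using S by (intro mult_mono) auto
  moreover have "tan M * (2*M - N - L + real m * pi) = 3*r*\<sigma>" using S(1) by (metis mult.commute)
  ultimately have "M * (real m * pi / 2) \<le> 3*r*\<sigma>" by linarith
  hence "M \<le> 3*r*\<sigma> / (real m * pi / 2)" using n by (subst pos_le_divide_eq) auto
  thus ?thesis using S n by (simp add: field_simps)
qed

lemma sq_bound: assumes "(x::real) \<ge> 0" "x * x \<le> 3*r*\<sigma>" "r > 0" "\<sigma> \<ge> 0" shows "x \<le> sqrt (3*r) * sqrt \<sigma>"
proof -
  have "x \<le> sqrt (3*r*\<sigma>)" using assms by (intro real_le_rsqrt) (simp add: power2_eq_square)
  thus ?thesis by (simp add: real_sqrt_mult)
qed

lemma bnd_M0: assumes r: "r > 0" "\<sigma> \<ge> 0" and S: "is_sol r m n \<sigma> L M N" and NM: "N \<le> M"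
  shows "M \<le> sqrt (3*r) * sqrt \<sigma>"
proof -
  have S: "(2*M - N - L + real m * pi) * tan M = 3*r*\<sigma>" "-(pi/2) < L" "L \<le> 0" "0 \<le> M" "M < pi/2" "0 \<le> N" "N < pi/2"
    using S by (auto simp: is_sol_def)
  have "M \<le> 2*M - N - L + real m * pi" using S NM by (smt (verit) mult_nonneg_nonneg of_nat_0_le_iff pi_gt_zero)
  moreover have "M \<le> tan M" using tan_ge_x S by auto
  ultimately have "M * M \<le> tan M * (2*M - N - L + real m * pi)"
    using S by (intro mult_mono) auto
  moreover have "tan M * (2*M - N - L + real m * pi) = 3*r*\<sigma>" using S(1) by (metis mult.commute)
  ultimately have "M * M \<le> 3*r*\<sigma>" by linarith
  thus ?thesis using S r by (intro sq_bound) auto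
qed

lemma bnd_N0: assumes r: "r > 0" "\<sigma> \<ge> 0" and S: "is_sol r m n \<sigma> L M N" and NM: "M \<le> N"
  shows "N \<le> sqrt (3*r) * sqrt \<sigma>"
proof -
  have S: "(2*N - L - M + real n * pi) * tan N = 3*r*\<sigma>" "-(pi/2) < L" "L \<le> 0" "0 \<le> M" "M < pi/2" "0 \<le> N" "N < pi/2"
    using S by (auto simp: is_sol_def)
  have "N \<le> 2*N - L - M + real n * pi" using S NM by (smt (verit) mult_nonneg_nonneg of_nat_0_le_iff pi_gt_zero)
  moreover have "N \<le> tan N" using tan_ge_x S by auto
  ultimately have "N * N \<le> tan N * (2*N - L - M + real n * pi)"
    using S by (intro mult_mono) auto
  moreover have "tan N * (2*N - L - M + real n * pi) = 3*r*\<sigma>" using S(1) by (metis mult.commute)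
  ultimately have "N * N \<le> 3*r*\<sigma>" by linarith
  thus ?thesis using S r by (intro sq_bound) auto
qed

lemma bnd_L0: assumes r: "r > 0" "\<sigma> \<ge> 0" and S: "is_sol r m n \<sigma> L M N"
  shows "\<bar>L\<bar> \<le> sqrt (3*r) * sqrt \<sigma>"
proof -
  have S: "(2*L - M - N - (real m + real n) * pi) * tan L = 3*r*\<sigma>" "-(pi/2) < L" "L \<le> 0" "0 \<le> M" "M < pi/2" "0 \<le> N" "N < pi/2"
    using S by (auto simp: is_sol_def)
  have "-L \<le> -(2*L - M - N - (real m + real n) * pi)" using S
    by (smt (verit) mult_nonneg_nonneg of_nat_0_le_iff pi_gt_zero)
  moreover have "-L \<le> -tan L" using tan_le_x_neg S by auto
  ultimately have "(-L) * (-L) \<le> (- tan L) * (-(2*L - M - N - (real m + real n) * pi))"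
    using S by (intro mult_mono) auto
  moreover have "(- tan L) * (-(2*L - M - N - (real m + real n) * pi)) = 3*r*\<sigma>" using S(1) by (metis minus_mult_minus mult.commute)
  ultimately have "(-L) * (-L) \<le> 3*r*\<sigma>" by linarith
  hence "-L \<le> sqrt (3*r) * sqrt \<sigma>" using S r by (intro sq_bound) auto
  thus ?thesis using S by simp
qed

lemma sol_is_sol: assumes "r > 0" "\<sigma> \<ge> 0" "m \<le> n"
  shows "is_sol r m n \<sigma> (fst (sol r m n \<sigma>)) (fst (snd (sol r m n \<sigma>))) (snd (snd (sol r m n \<sigma>)))"
  unfolding sol_def using theI'[OF sol_ex1[OF assms]] .

lemma bnd_00: assumes r: "r > 0" "\<sigma> \<ge> 0" and S: "is_sol r 0 0 \<sigma> L M N"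
  shows "\<bar>L\<bar> \<le> sqrt (3*r) * sqrt \<sigma> \<and> \<bar>M\<bar> \<le> sqrt (3*r) * sqrt \<sigma> \<and> \<bar>N\<bar> \<le> sqrt (3*r) * sqrt \<sigma>"
proof -
  have p: "0 \<le> M" "0 \<le> N" using S by (auto simp: is_sol_def)
  have "M \<le> sqrt (3*r) * sqrt \<sigma> \<and> N \<le> sqrt (3*r) * sqrt \<sigma>"
  proof (cases "N \<le> M")
    case True
    then show ?thesis using bnd_M0[OF r S True] by simp
  next
    case False
    then show ?thesis using bnd_N0[OF r S] by simp
  qed
  thus ?thesis using p bnd_L0[OF r S] by simp
qed

theorem lemma8p1:
  fixes r :: real
  assumes "r > 0"
  shows "(\<forall>m n \<sigma>. m \<le> n \<and> \<sigma> \<ge> 0 \<longrightarrow>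
            (\<exists>!p. is_sol r m n \<sigma> (fst p) (fst (snd p)) (snd (snd p))))
       \<and> (\<exists>C. \<forall>m n \<sigma> L M N. m < n \<and> \<sigma> > 0 \<and> is_sol r m n \<sigma> L M N \<longrightarrow>
            \<bar>L\<bar> \<le> C * \<sigma> / real n \<and> \<bar>N\<bar> \<le> C * \<sigma> / real n)
       \<and> (\<exists>C. \<forall>m n \<sigma> L M N. 1 \<le> m \<and> m \<le> n \<and> \<sigma> > 0 \<and> is_sol r m n \<sigma> L M N \<longrightarrow>
            \<bar>M\<bar> \<le> C * \<sigma> / real m)
       \<and> (\<exists>C. \<forall>n::nat. 0 < n \<longrightarrow> (\<exists>\<delta>>0. \<forall>\<sigma> L M N. 0 < \<sigma> \<and> \<sigma> < \<delta> \<and> is_sol r 0 n \<sigma> L M N \<longrightarrow>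
            \<bar>M\<bar> \<le> C * sqrt \<sigma>))
       \<and> (\<exists>C. \<forall>\<sigma> L M N. \<sigma> \<ge> 0 \<and> is_sol r 0 0 \<sigma> L M N \<longrightarrow>
            \<bar>L\<bar> \<le> C * sqrt \<sigma> \<and> \<bar>M\<bar> \<le> C * sqrt \<sigma> \<and> \<bar>N\<bar> \<le> C * sqrt \<sigma>)
       \<and> continuous (at 0 within {0..}) (\<lambda>\<sigma>. sol r 0 0 \<sigma>)"
proof (intro conjI)
  show "\<forall>m n \<sigma>. m \<le> n \<and> \<sigma> \<ge> 0 \<longrightarrow> (\<exists>!p. is_sol r m n \<sigma> (fst p) (fst (snd p)) (snd (snd p)))"
    using sol_ex1[OF assms] by blast
  show "\<exists>C. \<forall>m n \<sigma> L M N. m < n \<and> \<sigma> > 0 \<and> is_sol r m n \<sigma> L M N \<longrightarrow>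
            \<bar>L\<bar> \<le> C * \<sigma> / real n \<and> \<bar>N\<bar> \<le> C * \<sigma> / real n"
    using bnd_L[OF assms] bnd_N[OF assms] by (intro exI[of _ "6*r/pi"]) auto
  show "\<exists>C. \<forall>m n \<sigma> L M N. 1 \<le> m \<and> m \<le> n \<and> \<sigma> > 0 \<and> is_sol r m n \<sigma> L M N \<longrightarrow>
            \<bar>M\<bar> \<le> C * \<sigma> / real m"
    using bnd_M[OF assms] by (intro exI[of _ "6*r/pi"]) auto
  show "\<exists>C. \<forall>n::nat. 0 < n \<longrightarrow> (\<exists>\<delta>>0. \<forall>\<sigma> L M N. 0 < \<sigma> \<and> \<sigma> < \<delta> \<and> is_sol r 0 n \<sigma> L M N \<longrightarrow>
            \<bar>M\<bar> \<le> C * sqrt \<sigma>)"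
  proof -
    have P4: "\<bar>M\<bar> \<le> (sqrt (3*r) + 6*r/pi) * sqrt \<sigma>" if n: "0 < n" and H: "0 < \<sigma> \<and> \<sigma> < 1 \<and> is_sol r 0 n \<sigma> L M N" for n :: nat and \<sigma> L M N
    proof -
    have S: "is_sol r 0 n \<sigma> L M N" and sg: "0 < \<sigma>" "\<sigma> < 1" using H by auto
    have p: "0 \<le> M" using S by (auto simp: is_sol_def)
    have c1: "0 \<le> sqrt (3*r) * sqrt \<sigma>" "0 \<le> 6*r/pi * sqrt \<sigma>" using assms sg by auto
    have ss: "\<sigma> \<le> sqrt \<sigma>" using sg by (intro real_le_rsqrt) (simp add: power2_eq_square mult_le_cancel_left1)
    have "M \<le> sqrt (3*r) * sqrt \<sigma> + 6*r/pi * sqrt \<sigma>"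
    proof (cases "N \<le> M")
      case True
      then show ?thesis using bnd_M0[OF assms _ S] sg c1 by simp
    next
      case False
      have "N \<le> 6*r/pi * \<sigma> / real n" using bnd_N[OF assms _ _ S] n sg by simp
      also have "\<dots> \<le> 6*r/pi * \<sigma>" using n sg assms by (simp add: field_simps mult_le_cancel_left1)
      also have "\<dots> \<le> 6*r/pi * sqrt \<sigma>" using ss assms by (intro mult_left_mono) auto
      finally show ?thesis using False c1 by simp
    qed
    thus "\<bar>M\<bar> \<le> (sqrt (3*r) + 6*r/pi) * sqrt \<sigma>" using p by (simp add: distrib_right)
    qed
    show ?thesis by (intro exI[of _ "sqrt (3*r) + 6*r/pi"] allI impI exI[of _ "1::real"] conjI) (auto intro: P4)
  qed
  show "\<exists>C. \<forall>\<sigma> L M N. \<sigma> \<ge> 0 \<and> is_sol r 0 0 \<sigma> L M N \<longrightarrow>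
            \<bar>L\<bar> \<le> C * sqrt \<sigma> \<and> \<bar>M\<bar> \<le> C * sqrt \<sigma> \<and> \<bar>N\<bar> \<le> C * sqrt \<sigma>"
    using bnd_00[OF assms] by (intro exI[of _ "sqrt (3*r)"]) auto
  show "continuous (at 0 within {0..}) (\<lambda>\<sigma>. sol r 0 0 \<sigma>)"
  proof -
    define g where "g = sol r 0 0"
    define C where "C = sqrt (3*r)"
    have gS: "is_sol r 0 0 \<sigma> (fst (g \<sigma>)) (fst (snd (g \<sigma>))) (snd (snd (g \<sigma>)))" if "\<sigma> \<ge> 0" for \<sigma>
      unfolding g_def using sol_is_sol[OF assms that] by simp
    have g0: "g 0 = (0, 0, 0)"
    proof -
      have "is_sol r 0 0 0 0 0 0" by (simp add: is_sol_def)
      from sol_uniq[OF assms _ gS[of 0] this] show ?thesis by (simp add: prod_eq_iff)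
    qed
    have B: "\<bar>fst (g \<sigma>)\<bar> \<le> C * sqrt \<sigma> \<and> \<bar>fst (snd (g \<sigma>))\<bar> \<le> C * sqrt \<sigma> \<and> \<bar>snd (snd (g \<sigma>))\<bar> \<le> C * sqrt \<sigma>"
      if "\<sigma> \<ge> 0" for \<sigma> unfolding C_def using bnd_00[OF assms that gS[OF that]] .
    have sq: "((\<lambda>\<sigma>. C * sqrt \<sigma>) \<longlongrightarrow> 0) (at 0 within {0..})"
    proof -
      have "((\<lambda>\<sigma>::real. C * sqrt \<sigma>) \<longlongrightarrow> C * sqrt 0) (at 0 within {0..})"
        by (intro tendsto_intros)
      thus ?thesis by simp
    qed
    have ev: "\<And>P. (\<And>\<sigma>. \<sigma> \<ge> 0 \<Longrightarrow> P \<sigma>) \<Longrightarrow> eventually P (at (0::real) within {0..})"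
      unfolding eventually_at_filter by (intro always_eventually) auto
    have t1: "((\<lambda>\<sigma>. fst (g \<sigma>)) \<longlongrightarrow> 0) (at 0 within {0..})"
      by (rule Lim_null_comparison[OF ev sq]) (use B in auto)
    have t2: "((\<lambda>\<sigma>. fst (snd (g \<sigma>))) \<longlongrightarrow> 0) (at 0 within {0..})"
      by (rule Lim_null_comparison[OF ev sq]) (use B in auto)
    have t3: "((\<lambda>\<sigma>. snd (snd (g \<sigma>))) \<longlongrightarrow> 0) (at 0 within {0..})"
      by (rule Lim_null_comparison[OF ev sq]) (use B in auto)
    have "((\<lambda>\<sigma>. (fst (g \<sigma>), fst (snd (g \<sigma>)), snd (snd (g \<sigma>)))) \<longlongrightarrow> (0, 0, 0)) (at 0 within {0..})"
      by (intro tendsto_Pair t1 t2 t3)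
    hence "(g \<longlongrightarrow> g 0) (at 0 within {0..})" unfolding g0 by simp
    thus ?thesis unfolding continuous_within g_def .
  qed
qed


end
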